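(* Let $A$ be a finite alphabet, $E\subseteq W(A)$ and $\vec s=(s_n(x))_{n=0}^\infty\in V^\infty(A)$ such that $E$ is large in $\vec s$. Then there exist $m\in\mathbb N$ and $w(x)\in\langle (s_n(x))_{n=0}^m\rangle_v$ such that $\{w(a):a\in A\}\subseteq E$.
   Context: $\mathbb N=\{0,1,2,\dots\}$. Let $A$ be a finite nonempty alphabet. $W(A)$ denotes the set of all finite words over $A$, including the empty word; words are concatenated by juxtaposition. Fix a symbol $x\notin A$. A variable word over $A$ is a finite word over $A\cup\{x\}$ in which $x$ occurs at least once; $V(A)$ is the set of variable words. For $s(x)\in V(A)$ and $a\in A\cup\{x\}$, $s(a)$ is obtained by replacing every occurrence of $x$ by $a$. $V^\infty(A)$ is the set of infinite sequences of variable words. For a sequence $(s_n(x))_{n\in I}$ of variable words indexed by a set $I\subseteq\mathbb N$ that is either a finite interval or of the form $\{m,m+1,\dots\}$: the constant span $\langle (s_n(x))_{n\in I}\rangle_c$ is the set of all words $s_{l_0}(a_0)s_{l_1}(a_1)\cdots s_{l_j}(a_j)$ with $j\ge 0$, $l_0<\dots<l_j$ in $I$ and $a_0,\dots,a_j\in A$; the variable span $\langle (s_n(x))_{n\in I}\rangle_v$ is the set of all words $s_{l_0}(a_0)\cdots s_{l_j}(a_j)$ with $j\ge0$, $l_0<\dots<l_j$ in $I$, $a_0,\dots,a_j\in A\cup\{x\}$ and at least one $a_i=x$. Extracted subsequences: let $\vec s=(s_n(x))_{n=0}^\infty\in V^\infty(A)$. A finite sequence $(t_n(x))_{n=0}^l$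 of variable words is an extracted subsequence of $\vec s$ if there exist integers $0=m_0<m_1<\dots<m_{l+1}$ with $t_i(x)\in\langle (s_n(x))_{n=m_i}^{m_{i+1}-1}\rangle_v$ for all $0\le i\le l$. An infinite sequence $\vec t=(t_n(x))_{n=0}^\infty$ is an extracted subsequence of $\vec s$ if every initial segment $(t_n(x))_{n=0}^l$ is a finite extracted subsequence of $\vec s$. We write $\vec t\le\vec s$. A set $E\subseteq W(A)$ is large in $\vec s\in V^\infty(A)$ if $E\cap\langle\vec w\rangle_c\neq\emptyset$ for every infinite extracted subsequence $\vec w$ of $\vec s$. *)

theory Defs
  imports Main
begin

text \<open>Alphabet A :: 'a set. Words over A are 'a lists with letters in A.
  Words over A \<union> {x} are 'a option lists: None plays the role of the variable x,
  Some a the letter a.\<close>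

definition words :: "'a set \<Rightarrow> 'a list set" where
  "words A = lists A"

definition is_var_word :: "'a set \<Rightarrow> 'a option list \<Rightarrow> bool" where
  "is_var_word A w \<longleftrightarrow> set w \<subseteq> insert None (Some ` A) \<and> None \<in> set w"

definition var_seqs :: "'a set \<Rightarrow> (nat \<Rightarrow> 'a option list) set" where
  "var_seqs A = {s. \<forall>n. is_var_word A (s n)}"

definition inst :: "'a option list \<Rightarrow> 'a \<Rightarrow> 'a list" where
  "inst w a = map (\<lambda>c. case c of None \<Rightarrow> a | Some b \<Rightarrow> b) w"

definition vinst :: "'a option list \<Rightarrow> 'a option \<Rightarrow> 'a option list" where
  "vinst w b = map (\<lambda>c. case c of None \<Rightarrow> b | Some d \<Rightarrow> Some d) w"

definition const_span :: "'a set \<Rightarrow> (nat \<Rightarrow> 'a option list) \<Rightarrow> nat set \<Rightarrow> 'a list set" where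
  "const_span A s I = {concat (map (\<lambda>(l, a). inst (s l) a) ps) | ps.
      ps \<noteq> [] \<and> sorted_wrt (<) (map fst ps) \<and> set (map fst ps) \<subseteq> I \<and> set (map snd ps) \<subseteq> A}"

definition var_span :: "'a set \<Rightarrow> (nat \<Rightarrow> 'a option list) \<Rightarrow> nat set \<Rightarrow> 'a option list set" where
  "var_span A s I = {concat (map (\<lambda>(l, b). vinst (s l) b) ps) | ps.
      ps \<noteq> [] \<and> sorted_wrt (<) (map fst ps) \<and> set (map fst ps) \<subseteq> I
      \<and> set (map snd ps) \<subseteq> insert None (Some ` A) \<and> None \<in> set (map snd ps)}"

text \<open>Infinite extracted subsequence t \<le> s: every initial segment (t_n)_{n=0}^l is a
  finite extracted subsequence, i.e. there are 0 = m_0 < m_1 < ... < m_{l+1} with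
  t_i \<in> var_span of (s_n)_{n=m_i}^{m_{i+1}-1} for i \<le> l.\<close>
definition extracted :: "'a set \<Rightarrow> (nat \<Rightarrow> 'a option list) \<Rightarrow> (nat \<Rightarrow> 'a option list) \<Rightarrow> bool" where
  "extracted A t s \<longleftrightarrow> (\<forall>l. \<exists>m :: nat \<Rightarrow> nat. m 0 = 0 \<and> (\<forall>i\<le>l. m i < m (Suc i))
      \<and> (\<forall>i\<le>l. t i \<in> var_span A s {m i..<m (Suc i)}))"

definition large :: "'a set \<Rightarrow> 'a list set \<Rightarrow> (nat \<Rightarrow> 'a option list) \<Rightarrow> bool" where
  "large A E s \<longleftrightarrow> (\<forall>t. extracted A t s \<longrightarrow> E \<inter> const_span A t UNIV \<noteq> {})"

end

theory Submission
  imports Defs "HOL-Library.FuncSet"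
begin


definition WW :: "'a set \<Rightarrow> nat \<Rightarrow> 'a list set" where
  "WW A n = {w. set w \<subseteq> A \<and> length w = n}"
definition LL :: "'a set \<Rightarrow> nat \<Rightarrow> 'a option list set" where
  "LL A n = {v. length v = n \<and> is_var_word A v}"
definition mono_line :: "'a set \<Rightarrow> nat \<Rightarrow> ('a list \<Rightarrow> nat) \<Rightarrow> bool" where
  "mono_line A N \<chi> \<longleftrightarrow> (\<exists>v\<in>LL A N. \<exists>c. \<forall>a\<in>A. \<chi> (inst v a) = c)"

lemma finite_WW: "finite A \<Longrightarrow> finite (WW A n)"
  using finite_lists_length_eq by (simp add: WW_def)
lemma inst_append[simp]: "inst (u@v) a = inst u a @ inst v a" by (simp add: inst_def)
lemma inst_map_Some[simp]: "inst (map Some u) a = u" by (induct u) (simp_all add: inst_def)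
lemma length_inst[simp]: "length (inst v a) = length v" by (simp add: inst_def)
lemma inst_WW: "v \<in> LL A n \<Longrightarrow> a \<in> A \<Longrightarrow> inst v a \<in> WW A n"
  by (auto simp: LL_def WW_def is_var_word_def inst_def split: option.splits)
lemma LL_mono: "B \<subseteq> A \<Longrightarrow> LL B n \<subseteq> LL A n"
  by (auto simp: LL_def is_var_word_def)
lemma WW_mono: "B \<subseteq> A \<Longrightarrow> WW B n \<subseteq> WW A n"
  by (auto simp: WW_def)
lemma LL_app1: "u \<in> LL A m \<Longrightarrow> v \<in> LL A n \<Longrightarrow> u@v \<in> LL A (m+n)"
  by (auto simp: LL_def is_var_word_def)
lemma LL_app2: "u \<in> LL A m \<Longrightarrow> w \<in> WW A n \<Longrightarrow> u @ map Some w \<in> LL A (m+n)"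
  by (auto simp: LL_def WW_def is_var_word_def)
lemma LL_app3: "w \<in> WW A m \<Longrightarrow> v \<in> LL A n \<Longrightarrow> map Some w @ v \<in> LL A (m+n)"
  by (auto simp: LL_def WW_def is_var_word_def)
lemma WW_app: "u \<in> WW A m \<Longrightarrow> w \<in> WW A n \<Longrightarrow> u @ w \<in> WW A (m+n)"
  by (auto simp: WW_def)
lemma LL_None: "[None] \<in> LL A 1" by (auto simp: LL_def is_var_word_def)

lemma HJ:
  assumes "finite A"
  shows "\<forall>r. \<exists>N. \<forall>\<chi>::'a list \<Rightarrow> nat. (\<forall>w\<in>WW A N. \<chi> w < r) \<longrightarrow> mono_line A N \<chi>"
  using assms
proof (induction A rule: finite_induct)
  case empty
  then show ?case using LL_None unfolding mono_line_def by blast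
next
  case (insert z B)
  show ?case
  proof (cases "B = {}")
    case True
    show ?thesis
    proof (intro allI exI[of _ 1] impI)
      fix r and \<chi> :: "'a list \<Rightarrow> nat"
      show "mono_line (insert z B) 1 \<chi>"
        unfolding mono_line_def using LL_None True
        by (intro bexI[of _ "[None]"] exI[of _ "\<chi> [z]"]) (auto simp: inst_def)
    qed
  next
    case False
    then obtain b0 where b0: "b0 \<in> B" by blast
    show ?thesis
    proof
      fix r
      have focus: "\<exists>N. \<forall>\<chi>::'a list\<Rightarrow>nat. (\<forall>w\<in>WW (insert z B) N. \<chi> w < r) \<longrightarrow>
          mono_line (insert z B) N \<chi> \<or>
          (\<exists>v c f. f \<in> WW (insert z B) N \<and> (\<forall>i<q. v i \<in> LL (insert z B) N \<and>
             (\<forall>a\<in>B. \<chi> (inst (v i) a) = c i) \<and> inst (v i) z = f) \<and> inj_on c {..<q})" for q :: nat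
      proof (induction q)
        case 0
        show ?case
        proof (intro exI[of _ 0] allI impI disjI2)
          fix \<chi> :: "'a list \<Rightarrow> nat"
          show "\<exists>v c f. f \<in> WW (insert z B) 0 \<and> (\<forall>i<0. v i \<in> LL (insert z B) 0 \<and>
             (\<forall>a\<in>B. \<chi> (inst (v i) a) = c i) \<and> inst (v i) z = f) \<and> inj_on c {..<(0::nat)}"
            by (rule exI[of _ undefined], rule exI[of _ undefined], rule exI[of _ "[]"]) (simp add: WW_def)
        qed
      next
        case (Suc q)
        obtain n where hn: "\<forall>\<chi>::'a list\<Rightarrow>nat. (\<forall>w\<in>WW (insert z B) n. \<chi> w < r) \<longrightarrow>
          mono_line (insert z B) n \<chi> \<or>
          (\<exists>v c f. f \<in> WW (insert z B) n \<and> (\<forall>i<q. v i \<in> LL (insert z B) n \<and>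
             (\<forall>a\<in>B. \<chi> (inst (v i) a) = c i) \<and> inst (v i) z = f) \<and> inj_on c {..<q})" using Suc.IH ..
        define F where "F = WW (insert z B) n \<rightarrow>\<^sub>E {..<r}"
        have finF: "finite F" unfolding F_def
          using insert(1) by (intro finite_PiE finite_WW) auto
        obtain g where g: "bij_betw g F {0..<card F}" using ex_bij_betw_finite_nat[OF finF] by blast
        obtain m where hm: "\<forall>\<chi>::'a list\<Rightarrow>nat. (\<forall>w\<in>WW B m. \<chi> w < card F) \<longrightarrow> mono_line B m \<chi>"
          using insert.IH[rule_format, of "card F"] ..
        show ?case
        proof (intro exI[of _ "m+n"] allI impI)
          fix \<chi> :: "'a list \<Rightarrow> nat"
          assume chi: "\<forall>w\<in>WW (insert z B) (m+n). \<chi> w < r"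
          define \<chi>' where "\<chi>' = (\<lambda>u. g (restrict (\<lambda>w. \<chi> (u@w)) (WW (insert z B) n)))"
          have inF: "restrict (\<lambda>w. \<chi> (u@w)) (WW (insert z B) n) \<in> F" if "u \<in> WW B m" for u
          proof -
            have "u \<in> WW (insert z B) m" using that WW_mono[of B "insert z B"] by blast
            then have "\<forall>w\<in>WW (insert z B) n. \<chi> (u@w) < r" using chi WW_app by blast
            then show ?thesis unfolding F_def by (simp add: restrict_PiE_iff)
          qed
          have bound: "\<forall>u\<in>WW B m. \<chi>' u < card F"
          proof
            fix u assume u: "u \<in> WW B m"
            have "g (restrict (\<lambda>w. \<chi> (u@w)) (WW (insert z B) n)) \<in> {0..<card F}"
              by (rule bij_betw_apply[OF g inF[OF u]])
            then show "\<chi>' u < card F" by (simp add: \<chi>'_def)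
          qed
          have "mono_line B m \<chi>'" by (rule mp[OF spec[OF hm, of \<chi>'] bound])
          then obtain l c' where l: "l \<in> LL B m" and lc: "\<forall>a\<in>B. \<chi>' (inst l a) = c'"
            unfolding mono_line_def by blast
          have lA: "l \<in> LL (insert z B) m" by (rule subsetD[OF LL_mono[OF subset_insertI] l])
          have same: "\<chi> (inst l a @ w) = \<chi> (inst l b0 @ w)" if "a\<in>B" "w \<in> WW (insert z B) n" for a w
          proof -
            have i1: "inst l a \<in> WW B m" "inst l b0 \<in> WW B m" using inst_WW[OF l] that(1) b0 by auto
            have "\<chi>' (inst l a) = \<chi>' (inst l b0)" using lc that b0 by auto
            have "restrict (\<lambda>w. \<chi> (inst l a@w)) (WW (insert z B) n) =
                       restrict (\<lambda>w. \<chi> (inst l b0@w)) (WW (insert z B) n)"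
              by (rule inj_onD[OF bij_betw_imp_inj_on[OF g] _ inF[OF i1(1)] inF[OF i1(2)]])
                 (use \<open>\<chi>' (inst l a) = \<chi>' (inst l b0)\<close> in \<open>simp add: \<chi>'_def\<close>)
            then have "restrict (\<lambda>w. \<chi> (inst l a@w)) (WW (insert z B) n) w =
                       restrict (\<lambda>w. \<chi> (inst l b0@w)) (WW (insert z B) n) w" by (rule fun_cong)
            then show ?thesis using that(2) by simp
          qed
          define \<chi>'' where "\<chi>'' = (\<lambda>w. \<chi> (inst l b0 @ w))"
          have lb0: "inst l b0 \<in> WW (insert z B) m" using inst_WW[OF lA, of b0] b0 by simp
          have "\<forall>w\<in>WW (insert z B) n. \<chi>'' w < r"
            unfolding \<chi>''_def using chi WW_app[OF lb0] by auto
          then have "mono_line (insert z B) n \<chi>'' \<or>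
            (\<exists>v c f. f \<in> WW (insert z B) n \<and> (\<forall>i<q. v i \<in> LL (insert z B) n \<and>
             (\<forall>a\<in>B. \<chi>'' (inst (v i) a) = c i) \<and> inst (v i) z = f) \<and> inj_on c {..<q})" by (rule mp[OF spec[OF hn, of \<chi>'']])
          then show "mono_line (insert z B) (m+n) \<chi> \<or>
            (\<exists>v c f. f \<in> WW (insert z B) (m+n) \<and> (\<forall>i<Suc q. v i \<in> LL (insert z B) (m+n) \<and>
             (\<forall>a\<in>B. \<chi> (inst (v i) a) = c i) \<and> inst (v i) z = f) \<and> inj_on c {..<Suc q})"
          proof
            assume "mono_line (insert z B) n \<chi>''"
            then obtain v c where v: "v \<in> LL (insert z B) n" "\<forall>a\<in>insert z B. \<chi>'' (inst v a) = c"
              by (auto simp: mono_line_def)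
            have "map Some (inst l b0) @ v \<in> LL (insert z B) (m+n)" using LL_app3[OF lb0 v(1)] .
            moreover have "\<forall>a\<in>insert z B. \<chi> (inst (map Some (inst l b0) @ v) a) = c"
              using v(2) unfolding \<chi>''_def by simp
            ultimately have "mono_line (insert z B) (m+n) \<chi>" unfolding mono_line_def by blast
            then show ?thesis ..
          next
            assume "\<exists>v c f. f \<in> WW (insert z B) n \<and> (\<forall>i<q. v i \<in> LL (insert z B) n \<and>
             (\<forall>a\<in>B. \<chi>'' (inst (v i) a) = c i) \<and> inst (v i) z = f) \<and> inj_on c {..<q}"
            then obtain v c f where f: "f \<in> WW (insert z B) n"
              and vi: "\<And>i. i<q \<Longrightarrow> v i \<in> LL (insert z B) n"
              and ci: "\<And>i a. i<q \<Longrightarrow> a\<in>B \<Longrightarrow> \<chi>'' (inst (v i) a) = c i"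
              and fi: "\<And>i. i<q \<Longrightarrow> inst (v i) z = f"
              and inj: "inj_on c {..<q}" by blast
            show ?thesis
            proof (cases "\<exists>i<q. c i = \<chi>'' f")
              case True
              then obtain i where i: "i<q" "c i = \<chi>'' f" by blast
              have "map Some (inst l b0) @ v i \<in> LL (insert z B) (m+n)" using LL_app3[OF lb0 vi[OF i(1)]] .
              moreover have "\<forall>a\<in>insert z B. \<chi> (inst (map Some (inst l b0) @ v i) a) = c i"
                using ci[OF i(1)] fi[OF i(1)] i(2) unfolding \<chi>''_def by auto
              ultimately have "mono_line (insert z B) (m+n) \<chi>" unfolding mono_line_def by blast
              then show ?thesis ..
            next
              case False
              define V where "V j = (if j<q then l @ v j else l @ map Some f)" for j
              define C where "C j = (if j < q then c j else \<chi>'' f)" for j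
              have "inst l z @ f \<in> WW (insert z B) (m+n)"
                using WW_app[OF inst_WW[OF lA] f] by auto
              moreover have "\<forall>i<Suc q. V i \<in> LL (insert z B) (m+n) \<and>
                 (\<forall>a\<in>B. \<chi> (inst (V i) a) = C i) \<and> inst (V i) z = inst l z @ f"
              proof (intro allI impI conjI ballI)
                fix i assume i: "i < Suc q"
                show "V i \<in> LL (insert z B) (m+n)"
                  using LL_app1[OF lA vi] LL_app2[OF lA f] i unfolding V_def by auto
                show "inst (V i) z = inst l z @ f" using fi unfolding V_def by auto
                fix a assume a: "a \<in> B"
                show "\<chi> (inst (V i) a) = C i"
                proof (cases "i < q")
                  case True
                  have "inst (v i) a \<in> WW (insert z B) n" using inst_WW[OF vi[OF True]] a by auto
                  then show ?thesis using True same[OF a] ci[OF True a] unfolding V_def C_def \<chi>''_def by auto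
                next
                  case False
                  then show ?thesis using same[OF a f] unfolding V_def C_def \<chi>''_def by auto
                qed
              qed
              moreover have "inj_on C {..<Suc q}"
              proof -
                have "inj_on C {..<q}" using inj unfolding C_def inj_on_def by auto
                moreover have "C q \<notin> C ` {..<q}" using False unfolding C_def by auto
                ultimately show ?thesis by (simp add: lessThan_Suc)
              qed
              ultimately show ?thesis by blast
            qed
          qed
        qed
      qed
      obtain N where hN: "\<forall>\<chi>::'a list\<Rightarrow>nat. (\<forall>w\<in>WW (insert z B) N. \<chi> w < r) \<longrightarrow>
          mono_line (insert z B) N \<chi> \<or>
          (\<exists>v c f. f \<in> WW (insert z B) N \<and> (\<forall>i<r. v i \<in> LL (insert z B) N \<and>
             (\<forall>a\<in>B. \<chi> (inst (v i) a) = c i) \<and> inst (v i) z = f) \<and> inj_on c {..<r})" using focus[of r] ..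
      show "\<exists>N. \<forall>\<chi>::'a list\<Rightarrow>nat. (\<forall>w\<in>WW (insert z B) N. \<chi> w < r) \<longrightarrow> mono_line (insert z B) N \<chi>"
      proof (intro exI[of _ N] allI impI)
        fix \<chi> :: "'a list \<Rightarrow> nat"
        assume chi: "\<forall>w\<in>WW (insert z B) N. \<chi> w < r"
        from chi have "mono_line (insert z B) N \<chi> \<or>
          (\<exists>v c f. f \<in> WW (insert z B) N \<and> (\<forall>i<r. v i \<in> LL (insert z B) N \<and>
             (\<forall>a\<in>B. \<chi> (inst (v i) a) = c i) \<and> inst (v i) z = f) \<and> inj_on c {..<r})" by (rule mp[OF spec[OF hN, of \<chi>]])
        then show "mono_line (insert z B) N \<chi>"
        proof
          assume "\<exists>v c f. f \<in> WW (insert z B) N \<and> (\<forall>i<r. v i \<in> LL (insert z B) N \<and>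
             (\<forall>a\<in>B. \<chi> (inst (v i) a) = c i) \<and> inst (v i) z = f) \<and> inj_on c {..<r}"
          then obtain v c f where f: "f \<in> WW (insert z B) N"
              and vi: "\<And>i. i<r \<Longrightarrow> v i \<in> LL (insert z B) N"
              and ci: "\<And>i a. i<r \<Longrightarrow> a\<in>B \<Longrightarrow> \<chi> (inst (v i) a) = c i"
              and fi: "\<And>i. i<r \<Longrightarrow> inst (v i) z = f"
              and inj: "inj_on c {..<r}" by blast
          have sub: "c ` {..<r} \<subseteq> {..<r}"
          proof
            fix y assume "y \<in> c ` {..<r}"
            then obtain i where i: "i < r" "y = c i" by blast
            have "inst (v i) b0 \<in> WW (insert z B) N" using inst_WW[OF vi[OF i(1)]] b0 by auto
            then show "y \<in> {..<r}" using chi ci[OF i(1) b0] i by auto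
          qed
          have "c ` {..<r} = {..<r}"
            using sub card_image[OF inj] by (intro card_subset_eq) auto
          moreover have "\<chi> f \<in> {..<r}" using chi f by auto
          ultimately have "\<chi> f \<in> c ` {..<r}" by simp
          then obtain j where j: "j < r" "c j = \<chi> f" by (auto elim!: imageE)
          show ?thesis unfolding mono_line_def
            using vi[OF j(1)] ci[OF j(1)] fi[OF j(1)] j(2) by (intro bexI[of _ "v j"] exI[of _ "c j"]) auto
        qed
      qed
    qed
  qed
qed



definition Psi :: "(nat \<Rightarrow> 'a option list) \<Rightarrow> nat \<Rightarrow> 'a option list \<Rightarrow> 'a option list" where
  "Psi s M v = concat (map (\<lambda>(l,b). vinst (s l) b) (zip [M..<M+length v] v))"

definition cprefix :: "'a set \<Rightarrow> (nat \<Rightarrow> 'a option list) \<Rightarrow> nat \<Rightarrow> 'a option list set" where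
  "cprefix A s M = {concat (map (\<lambda>(l,b). vinst (s l) b) ps) | ps. sorted_wrt (<) (map fst ps)
      \<and> set (map fst ps) \<subseteq> {..<M} \<and> set (map snd ps) \<subseteq> Some ` A}"

lemma inst_vinst: "inst (vinst w b) a = inst w (case b of None \<Rightarrow> a | Some d \<Rightarrow> d)"
  by (induct w) (auto simp: inst_def vinst_def split: option.splits)
lemma vinst_vinst: "vinst (vinst w b') b = vinst w (case b' of None \<Rightarrow> b | Some d \<Rightarrow> Some d)"
  by (induct w) (auto simp: vinst_def split: option.splits)
lemma vinst_Nil[simp]: "vinst [] b = []" by (simp add: vinst_def)
lemma vinst_append[simp]: "vinst (u@v) b = vinst u b @ vinst v b" by (simp add: vinst_def)
lemma inst_concat: "inst (concat xs) a = concat (map (\<lambda>x. inst x a) xs)"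
  by (simp add: inst_def map_concat)
lemma vinst_concat: "vinst (concat xs) b = concat (map (\<lambda>x. vinst x b) xs)"
  by (simp add: vinst_def map_concat)
lemma vinst_Some_noNone: "None \<notin> set (vinst w (Some d))"
  by (auto simp: vinst_def split: option.splits)
lemma inst_noNone: "None \<notin> set p \<Longrightarrow> inst p a = inst p b"
  by (induct p) (auto simp: inst_def split: option.splits)

lemma Psi_inst: "inst (Psi s M v) a = inst (Psi s M (map Some (inst v a))) a0"
proof -
  have "inst v a = map (\<lambda>c. case c of None \<Rightarrow> a | Some d \<Rightarrow> d) v" by (simp add: inst_def)
  then show ?thesis
    by (simp add: Psi_def inst_concat zip_map2 inst_vinst split_def comp_def split: option.splits)
qed

lemma Psi_var_span:
  assumes "v \<in> LL A N" shows "Psi s M v \<in> var_span A s {M..<M+N}"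
proof -
  have len: "length v = N" and sv: "set v \<subseteq> insert None (Some ` A)" and nv: "None \<in> set v"
    using assms by (auto simp: LL_def is_var_word_def)
  define ps where "ps = zip [M..<M+N] v"
  have f: "map fst ps = [M..<M+N]" unfolding ps_def using len by simp
  have sn: "map snd ps = v" unfolding ps_def using len by simp
  have ne: "ps \<noteq> []" using sn nv by auto
  have "Psi s M v = concat (map (\<lambda>(l,b). vinst (s l) b) ps)" unfolding Psi_def ps_def len ..
  moreover have "sorted_wrt (<) (map fst ps) \<and> set (map fst ps) \<subseteq> {M..<M+N}
      \<and> set (map snd ps) \<subseteq> insert None (Some ` A) \<and> None \<in> set (map snd ps)"
    using f sn sv nv by simp
  ultimately show ?thesis unfolding var_span_def using ne by blast
qed

lemma noNone_concat:
  assumes "set (map snd ps) \<subseteq> Some ` A"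
  shows "None \<notin> set (concat (map (\<lambda>(l,b). vinst (s l) b) ps))"
  using assms
proof (induct ps)
  case Nil then show ?case by simp
next
  case (Cons x ps)
  obtain l b where x: "x = (l,b)" by (cases x)
  then obtain d where "b = Some d" using Cons.prems by auto
  then show ?case using Cons vinst_Some_noNone[of "s l" d] x by simp
qed

lemma cprefix_noNone: "p \<in> cprefix A s M \<Longrightarrow> None \<notin> set p"
  unfolding cprefix_def using noNone_concat by blast

lemma nil_cprefix: "[] \<in> cprefix A s M"
  unfolding cprefix_def by (rule CollectI, rule exI[of _ "[]"]) simp

lemma cprefix_mono: assumes "M \<le> M'" shows "cprefix A s M \<subseteq> cprefix A s M'"
proof
  fix p assume "p \<in> cprefix A s M"
  then obtain ps where p: "p = concat (map (\<lambda>(l,b). vinst (s l) b) ps)" "sorted_wrt (<) (map fst ps)"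
      "set (map fst ps) \<subseteq> {..<M}" "set (map snd ps) \<subseteq> Some ` A"
    unfolding cprefix_def by blast
  have "set (map fst ps) \<subseteq> {..<M'}" using p(3) assms by auto
  then show "p \<in> cprefix A s M'" unfolding cprefix_def using p(1,2,4) by blast
qed

lemma cprefix_app_var:
  assumes "p \<in> cprefix A s M" "w \<in> var_span A s {M..<K}"
  shows "p @ w \<in> var_span A s {0..K}"
proof -
  obtain ps where p: "p = concat (map (\<lambda>(l,b). vinst (s l) b) ps)" "sorted_wrt (<) (map fst ps)"
      "set (map fst ps) \<subseteq> {..<M}" "set (map snd ps) \<subseteq> Some ` A"
    using assms(1) unfolding cprefix_def by blast
  obtain qs where q: "w = concat (map (\<lambda>(l,b). vinst (s l) b) qs)" "qs \<noteq> []" "sorted_wrt (<) (map fst qs)"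
      "set (map fst qs) \<subseteq> {M..<K}" "set (map snd qs) \<subseteq> insert None (Some ` A)" "None \<in> set (map snd qs)"
    using assms(2) unfolding var_span_def by blast
  have "sorted_wrt (<) (map fst (ps @ qs))"
    using p(2,3) q(3,4) by (fastforce simp: sorted_wrt_append)
  moreover have "set (map fst (ps @ qs)) \<subseteq> {0..K}"
  proof -
    have "M < K" using q(2,4) by (cases qs) auto
    then show ?thesis using p(3) q(4) by fastforce
  qed
  moreover have "set (map snd (ps @ qs)) \<subseteq> insert None (Some ` A)" using p(4) q(5) by auto
  moreover have "None \<in> set (map snd (ps @ qs))" using q(6) by auto
  moreover have "p @ w = concat (map (\<lambda>(l,b). vinst (s l) b) (ps @ qs))" using p(1) q(1) by simp
  ultimately show ?thesis unfolding var_span_def using q(2) by blast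
qed

lemma cprefix_ext:
  assumes "p \<in> cprefix A s M" "w \<in> var_span A s {M..<K}" "a \<in> A"
  shows "p @ vinst w (Some a) \<in> cprefix A s K"
proof -
  obtain ps where p: "p = concat (map (\<lambda>(l,b). vinst (s l) b) ps)" "sorted_wrt (<) (map fst ps)"
      "set (map fst ps) \<subseteq> {..<M}" "set (map snd ps) \<subseteq> Some ` A"
    using assms(1) unfolding cprefix_def by blast
  obtain qs where q: "w = concat (map (\<lambda>(l,b). vinst (s l) b) qs)" "qs \<noteq> []" "sorted_wrt (<) (map fst qs)"
      "set (map fst qs) \<subseteq> {M..<K}" "set (map snd qs) \<subseteq> insert None (Some ` A)" "None \<in> set (map snd qs)"
    using assms(2) unfolding var_span_def by blast
  define qs' where "qs' = map (\<lambda>(l,b'). (l, case b' of None \<Rightarrow> Some a | Some d \<Rightarrow> Some d)) qs"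
  have mf: "map fst qs' = map fst qs" unfolding qs'_def by (induct qs) auto
  have "vinst w (Some a) = concat (map (\<lambda>(l,b). vinst (s l) b) qs')"
    unfolding q(1) qs'_def by (induct qs) (auto simp: vinst_concat vinst_vinst)
  moreover have "set (map snd qs') \<subseteq> Some ` A"
    using q(5) assms(3) unfolding qs'_def by (auto split: option.splits)
  moreover have "sorted_wrt (<) (map fst (ps @ qs'))"
    using p(2,3) q(3,4) mf by (fastforce simp: sorted_wrt_append)
  moreover have "set (map fst (ps @ qs')) \<subseteq> {..<K}"
  proof -
    have "M < K" using q(2,4) by (cases qs) auto
    then show ?thesis using p(3) q(4) mf by fastforce
  qed
  ultimately show ?thesis using p(1,4) unfolding cprefix_def
    by (intro CollectI exI[of _ "ps @ qs'"]) auto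
qed



lemma choose:
  assumes fA: "finite A" and neA: "A \<noteq> {}"
    and H: "\<And>m w. w \<in> var_span A s {0..m} \<Longrightarrow> \<exists>a\<in>A. inst w a \<notin> E"
    and fP: "finite P" and PM: "P \<subseteq> cprefix A s M"
  shows "\<exists>x. 0 < fst x \<and> snd x \<in> var_span A s {M..<M + fst x} \<and> (\<forall>p\<in>P. \<forall>a\<in>A. inst (p @ snd x) a \<notin> E)"
proof -
  obtain a0 where a0: "a0 \<in> A" using neA by blast
  have fPP: "finite (Pow P)" using fP by simp
  obtain g where g: "bij_betw g (Pow P) {0..<card (Pow P)}" using ex_bij_betw_finite_nat[OF fPP] by blast
  obtain N where hN: "\<forall>\<chi>::'a list \<Rightarrow> nat. (\<forall>w\<in>WW A N. \<chi> w < card (Pow P)) \<longrightarrow> mono_line A N \<chi>"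
    using HJ[OF fA, rule_format, of "card (Pow P)"] ..
  define S where "S c = {p\<in>P. inst (p @ Psi s M (map Some c)) a0 \<in> E}" for c
  define \<chi> where "\<chi> c = g (S c)" for c
  have SP: "S c \<in> Pow P" for c unfolding S_def by auto
  have bound: "\<forall>w\<in>WW A N. \<chi> w < card (Pow P)"
  proof
    fix w
    have "g (S w) \<in> {0..<card (Pow P)}" by (rule bij_betw_apply[OF g SP])
    then show "\<chi> w < card (Pow P)" by (simp add: \<chi>_def)
  qed
  have "mono_line A N \<chi>" by (rule mp[OF spec[OF hN, of \<chi>] bound])
  then obtain v cc where v: "v \<in> LL A N" and vc: "\<forall>a\<in>A. \<chi> (inst v a) = cc"
    unfolding mono_line_def by blast
  have Seq: "S (inst v a) = S (inst v b)" if "a \<in> A" "b \<in> A" for a b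
  proof -
    have "g (S (inst v a)) = g (S (inst v b))" using vc that unfolding \<chi>_def by simp
    then show ?thesis by (rule inj_onD[OF bij_betw_imp_inj_on[OF g] _ SP SP])
  qed
  have len: "length v = N" and nv: "None \<in> set v" using v by (auto simp: LL_def is_var_word_def)
  have Npos: "0 < N" using len nv by (cases v) auto
  define w where "w = Psi s M v"
  have wspan: "w \<in> var_span A s {M..<M+N}" unfolding w_def by (rule Psi_var_span[OF v])
  have key: "inst (p @ w) b = inst (p @ Psi s M (map Some (inst v b))) a0" if "p \<in> P" for p b
  proof -
    have "None \<notin> set p" using cprefix_noNone PM that by blast
    then have "inst p b = inst p a0" by (rule inst_noNone)
    moreover have "inst w b = inst (Psi s M (map Some (inst v b))) a0" unfolding w_def by (rule Psi_inst)
    ultimately show ?thesis by simp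
  qed
  have avoid: "\<forall>p\<in>P. \<forall>a\<in>A. inst (p @ w) a \<notin> E"
  proof (intro ballI notI)
    fix p a assume p: "p \<in> P" and a: "a \<in> A" and inE: "inst (p @ w) a \<in> E"
    have "inst (p @ Psi s M (map Some (inst v a))) a0 \<in> E" using inE by (simp only: key[OF p])
    then have "p \<in> S (inst v a)" unfolding S_def using p by blast
    have all: "\<forall>b\<in>A. inst (p @ w) b \<in> E"
    proof
      fix b assume b: "b \<in> A"
      have "p \<in> S (inst v b)" using \<open>p \<in> S (inst v a)\<close> Seq[OF a b] by simp
      then have "inst (p @ Psi s M (map Some (inst v b))) a0 \<in> E" unfolding S_def by blast
      then show "inst (p @ w) b \<in> E" by (simp only: key[OF p])
    qed
    have "p @ w \<in> var_span A s {0..M+N}" using cprefix_app_var PM p wspan by blast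
    then show False using H all by blast
  qed
  show ?thesis using Npos wspan avoid by (intro exI[of _ "(N, w)"]) simp
qed



primrec stf :: "(nat \<Rightarrow> 'a option list set \<Rightarrow> nat \<times> 'a option list) \<Rightarrow> 'a set \<Rightarrow> nat \<Rightarrow> nat \<times> 'a option list set" where
  "stf ch A 0 = (0, {[]})"
| "stf ch A (Suc n) = (fst (stf ch A n) + fst (ch (fst (stf ch A n)) (snd (stf ch A n))),
     snd (stf ch A n) \<union> (\<lambda>(p,a). p @ vinst (snd (ch (fst (stf ch A n)) (snd (stf ch A n)))) (Some a)) ` (snd (stf ch A n) \<times> A))"

theorem fact2p7:
  fixes A :: "'a set" and E :: "'a list set" and s :: "nat \<Rightarrow> 'a option list"
  assumes "finite A" and "A \<noteq> {}"
    and "E \<subseteq> words A"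
    and "s \<in> var_seqs A"
    and "large A E s"
  shows "\<exists>m w. w \<in> var_span A s {0..m} \<and> (\<forall>a\<in>A. inst w a \<in> E)"
proof (rule ccontr)
  assume "\<not> ?thesis"
  then have H: "\<And>m w. w \<in> var_span A s {0..m} \<Longrightarrow> \<exists>a\<in>A. inst w a \<notin> E" by blast
  define ch where "ch M P = (SOME x. 0 < fst x \<and> snd x \<in> var_span A s {M..<M + fst x}
      \<and> (\<forall>p\<in>P. \<forall>a\<in>A. inst (p @ snd x) a \<notin> E))" for M P
  have chP: "0 < fst (ch M P) \<and> snd (ch M P) \<in> var_span A s {M..<M + fst (ch M P)}
      \<and> (\<forall>p\<in>P. \<forall>a\<in>A. inst (p @ snd (ch M P)) a \<notin> E)"
    if "finite P" "P \<subseteq> cprefix A s M" for M P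
    unfolding ch_def by (rule someI_ex[OF choose[OF assms(1,2) H that]])
  define Mf where "Mf n = fst (stf ch A n)" for n
  define Pf where "Pf n = snd (stf ch A n)" for n
  define t where "t n = snd (ch (Mf n) (Pf n))" for n
  define Nn where "Nn n = fst (ch (Mf n) (Pf n))" for n
  have M0: "Mf 0 = 0" and P0: "Pf 0 = {[]}" by (simp_all add: Mf_def Pf_def)
  have MS: "Mf (Suc n) = Mf n + Nn n" for n by (simp add: Mf_def Nn_def Pf_def)
  have PS: "Pf (Suc n) = Pf n \<union> (\<lambda>(p,a). p @ vinst (t n) (Some a)) ` (Pf n \<times> A)" for n
    by (simp add: Mf_def Pf_def t_def)
  have inv: "finite (Pf n) \<and> Pf n \<subseteq> cprefix A s (Mf n)" for n
  proof (induction n)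
    case 0 then show ?case using nil_cprefix by (simp add: M0 P0)
  next
    case (Suc n)
    have c: "0 < Nn n" "t n \<in> var_span A s {Mf n..<Mf (Suc n)}"
      using chP[of "Pf n" "Mf n"] Suc unfolding t_def Nn_def MS by auto
    have "finite (Pf (Suc n))" using Suc assms(1) unfolding PS by simp
    moreover have "Pf (Suc n) \<subseteq> cprefix A s (Mf (Suc n))"
    proof -
      have "Pf n \<subseteq> cprefix A s (Mf (Suc n))" using Suc cprefix_mono[of "Mf n" "Mf (Suc n)" A s] MS by auto
      moreover have "(\<lambda>(p,a). p @ vinst (t n) (Some a)) ` (Pf n \<times> A) \<subseteq> cprefix A s (Mf (Suc n))"
        using cprefix_ext[OF _ c(2)] Suc by auto
      ultimately show ?thesis unfolding PS by blast
    qed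
    ultimately show ?case ..
  qed
  have tprop: "0 < Nn n \<and> t n \<in> var_span A s {Mf n..<Mf (Suc n)} \<and> (\<forall>p\<in>Pf n. \<forall>a\<in>A. inst (p @ t n) a \<notin> E)" for n
    using chP[of "Pf n" "Mf n"] inv[of n] unfolding t_def Nn_def MS by auto
  have ext: "extracted A t s"
    unfolding extracted_def
  proof
    fix l
    show "\<exists>m :: nat \<Rightarrow> nat. m 0 = 0 \<and> (\<forall>i\<le>l. m i < m (Suc i)) \<and> (\<forall>i\<le>l. t i \<in> var_span A s {m i..<m (Suc i)})"
      using tprop M0 MS by (intro exI[of _ Mf]) auto
  qed
  have Pmono: "Pf l \<subseteq> Pf n" if "l \<le> n" for l n
    using lift_Suc_mono_le[of Pf, OF _ that] PS by blast
  have claim: "\<exists>p\<in>Pf n. \<forall>a'. inst p a' = concat (map (\<lambda>(l,a). inst (t l) a) ps)"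
    if "sorted_wrt (<) (map fst ps)" "set (map snd ps) \<subseteq> A" "\<forall>l\<in>set (map fst ps). l < n" for ps n
    using that
  proof (induction ps arbitrary: n rule: rev_induct)
    case Nil
    then show ?case using Pmono[of 0 n] P0 by (intro bexI[of _ "[]"]) (auto simp: inst_def)
  next
    case (snoc x ps)
    obtain l a where x: "x = (l,a)" by (cases x)
    have sps: "sorted_wrt (<) (map fst ps)" and lt: "\<forall>l'\<in>set (map fst ps). l' < l"
      using snoc.prems(1) x by (auto simp: sorted_wrt_append)
    have a: "a \<in> A" and sA: "set (map snd ps) \<subseteq> A" using snoc.prems(2) x by auto
    have ln: "l < n" using snoc.prems(3) x by auto
    obtain p where p: "p \<in> Pf l" "\<forall>a'. inst p a' = concat (map (\<lambda>(l,a). inst (t l) a) ps)"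
      using snoc.IH[OF sps sA lt] by blast
    have "(p, a) \<in> Pf l \<times> A" using p(1) a by simp
    then have "p @ vinst (t l) (Some a) \<in> (\<lambda>(p,a). p @ vinst (t l) (Some a)) ` (Pf l \<times> A)"
      by (rule rev_image_eqI) simp
    then have "p @ vinst (t l) (Some a) \<in> Pf (Suc l)" unfolding PS by blast
    then have "p @ vinst (t l) (Some a) \<in> Pf n" using Pmono[of "Suc l" n] ln by auto
    moreover have "\<forall>a'. inst (p @ vinst (t l) (Some a)) a' = concat (map (\<lambda>(l,a). inst (t l) a) (ps @ [x]))"
      using p(2) x by (simp add: inst_vinst)
    ultimately show ?case by blast
  qed
  have "E \<inter> const_span A t UNIV \<noteq> {}" using assms(5) ext unfolding large_def by blast
  then obtain ps where ps: "ps \<noteq> []" "sorted_wrt (<) (map fst ps)" "set (map snd ps) \<subseteq> A"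
      and inE: "concat (map (\<lambda>(l, a). inst (t l) a) ps) \<in> E"
    unfolding const_span_def by blast
  obtain qs x where qs: "ps = qs @ [x]" using ps(1) by (cases ps rule: rev_cases) auto
  obtain l a where x: "x = (l,a)" by (cases x)
  have sqs: "sorted_wrt (<) (map fst qs)" and lt: "\<forall>l'\<in>set (map fst qs). l' < l"
    using ps(2) qs x by (auto simp: sorted_wrt_append)
  have a: "a \<in> A" and sA: "set (map snd qs) \<subseteq> A" using ps(3) qs x by auto
  obtain p where p: "p \<in> Pf l" "\<forall>a'. inst p a' = concat (map (\<lambda>(l,a). inst (t l) a) qs)"
    using claim[OF sqs sA lt] by blast
  have "concat (map (\<lambda>(l, a). inst (t l) a) ps) = inst (p @ t l) a"
    using p(2) qs x by simp
  moreover have "inst (p @ t l) a \<notin> E" using tprop[of l] p(1) a by blast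
  ultimately show False using inE by simp
qed

end
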